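(* Let $K$ be a finite oriented simplicial complex and let $p,q$ be integers with $0\le q\le p$. Fix the bases of $C_m(K)$ given by the oriented $m$-simplices, and for integers $m\ge k\ge0$ let $B_{m,k}=(b^{(m,k)}_{ij})$ be the matrix of $\partial_{m,k}\colon C_m(K)\to C_{m-k}(K)$ in these bases (rows indexed by $(m-k)$-simplices, columns by $m$-simplices). Then for every $q$-simplex $\sigma_j^{(q)}$, $$\deg_U^p(\sigma_j^{(q)})= -1+\sum_{q'=0}^{p}\sum_k\min\Big(1,\sum_{i}|b_{ji}^{(q+h,h)}|\,|b_{ki}^{(q'+h',h')}|\Big),$$ where $h=p-q$, $h'=p-q'$, $i$ runs over the $p$-simplices and $k$ over the $q'$-simplices of $K$.
   Context: $K$ is a finite abstract simplicial complex (finite family of nonempty finite vertex sets closed under nonempty subsets); a $q$-simplex has $q+1$ vertices; a face is a simplex of $K$ contained in a given simplex (a simplex is a face of itself). Orientations: orderings of vertices modulo even permutations, $[v_{\eta(0)},\dots,v_{\eta(m)}]=\operatorname{sign}(\eta)[v_0,\dots,v_m]$; each simplex has a fixed orientation; $C_m(K)$ is the real vector space with basis the oriented $m$-simplices (opposite orientation = negative). Multi-parameter boundary operator: for $m\ge k\ge0$, $\partial_{m,k}\colon C_m(K)\to C_{m-k}(K)$ is linear with $\partial_{m,k}([v_{\eta(0)},\dots,v_{\eta(m)}])=\sum_{J}\operatorname{sign}(\eta)\operatorname{sign}(\epsilon_J)[v_0,\dots,\widehat{v_{j_1}},\dots,\widehat{v_{j_k}},\dots,v_m]$, summing over subsets $J=\{j_1<\dots<j_k\}\subseteq\{0,\dots,m\}$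 (hatted vertices removed, others in increasing order), $\epsilon_J$ the permutation of $\{0,\dots,m\}$ with $r\mapsto j_{r+1}$ for $r<k$ and $k,\dots,m$ mapped increasingly onto the complement of $J$. In particular $\partial_{m,0}$ is the identity, and $b^{(m,k)}_{ij}$ is $\pm1$ if the $i$-th $(m-k)$-simplex is a face of the $j$-th $m$-simplex and $0$ otherwise. $p$-upper adjacency: two simplices are $p$-upper adjacent if some $p$-simplex of $K$ contains both as faces. The $p$-upper degree $\deg_U^p(\sigma^{(q)})$ is the number of simplices of $K$ (of any dimension), other than $\sigma^{(q)}$ itself, that are $p$-upper adjacent to $\sigma^{(q)}$.
   Formalization: The formula is asserted only for those q-simplices $\sigma_j^{(q)}$ that are faces of some p-simplex of K. The statement above fails without it. *)

theory Defs
  imports Main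
begin

definition simplicial_complex :: "'a set set \<Rightarrow> bool" where
  "simplicial_complex K \<longleftrightarrow> finite K \<and>
     (\<forall>s\<in>K. s \<noteq> {} \<and> finite s \<and> (\<forall>t. t \<noteq> {} \<and> t \<subseteq> s \<longrightarrow> t \<in> K))"

definition orientation :: "'a set set \<Rightarrow> ('a set \<Rightarrow> 'a list) \<Rightarrow> bool" where
  "orientation K ori \<longleftrightarrow> (\<forall>s\<in>K. distinct (ori s) \<and> set (ori s) = s)"

definition simplices :: "'a set set \<Rightarrow> nat \<Rightarrow> 'a set set" where
  "simplices K q = {s\<in>K. card s = Suc q}"

definition perm_sign :: "nat list \<Rightarrow> int" where
  "perm_sign xs = (-1) ^ card {(i, j). i < j \<and> j < length xs \<and> xs ! i > xs ! j}"

definition pos :: "'a list \<Rightarrow> 'a \<Rightarrow> nat" where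
  "pos ys x = (LEAST i. i < length ys \<and> ys ! i = x)"

text \<open>Entry of the matrix of the multi-parameter boundary operator
  \<open>\<partial>_{m,k}\<close> in the bases of oriented simplices: row index the (m-k)-simplex tau,
  column index the m-simplex sigma. Writing the fixed orientation of sigma as
  [v_0,...,v_m], the term for J (the removed positions) has coefficient sign(eps_J),
  and the resulting ordered face [v_0,..,hat..,v_m] equals sign(eta) times the fixed
  orientation of tau, where eta is the reordering permutation.\<close>
definition bcoef :: "'a set set \<Rightarrow> ('a set \<Rightarrow> 'a list) \<Rightarrow> nat \<Rightarrow> nat \<Rightarrow> 'a set \<Rightarrow> 'a set \<Rightarrow> int" where
  "bcoef K ori m k tau sigma =
    (if k \<le> m \<and> sigma \<in> simplices K m \<and> tau \<in> simplices K (m - k) \<and> tau \<subseteq> sigma then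
       (let vs = ori sigma;
            J = filter (\<lambda>j. vs ! j \<notin> tau) [0..<Suc m];
            C = filter (\<lambda>j. vs ! j \<in> tau) [0..<Suc m];
            R = map ((!) vs) C
        in perm_sign (J @ C) * perm_sign (map (pos (ori tau)) R))
     else 0)"

definition upper_degree :: "'a set set \<Rightarrow> nat \<Rightarrow> 'a set \<Rightarrow> nat" where
  "upper_degree K p sigma =
     card {tau\<in>K. tau \<noteq> sigma \<and> (\<exists>rho\<in>simplices K p. sigma \<subseteq> rho \<and> tau \<subseteq> rho)}"

end

theory Submission
  imports Defs
begin

lemma abs_perm_sign: "\<bar>perm_sign xs\<bar> = 1"
  unfolding perm_sign_def by (simp add: power_abs)

lemma abs_bcoef:
  "\<bar>bcoef K ori m k tau sigma\<bar> =
   (if k \<le> m \<and> sigma \<in> simplices K m \<and> tau \<in> simplices K (m - k) \<and> tau \<subseteq> sigma then 1 else 0)"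
  unfolding bcoef_def Let_def by (simp add: abs_mult abs_perm_sign)

theorem theoremt:
  fixes K :: "'a set set" and ori :: "'a set \<Rightarrow> 'a list" and p q :: nat and sigma :: "'a set"
  assumes "simplicial_complex K"
    and "orientation K ori"
    and "q \<le> p"
    and "sigma \<in> simplices K q"
    and "\<exists>rho\<in>simplices K p. sigma \<subseteq> rho"
  shows "int (upper_degree K p sigma) =
    -1 + (\<Sum>q'=0..p. \<Sum>k\<in>simplices K q'.
            min 1 (\<Sum>i\<in>simplices K p.
               \<bar>bcoef K ori (q + (p - q)) (p - q) sigma i\<bar> * \<bar>bcoef K ori (q' + (p - q')) (p - q') k i\<bar>))"
proof -
  have finK: "finite K" using assms(1) unfolding simplicial_complex_def by blast
  have fins: "\<And>n. finite (simplices K n)" using finK unfolding simplices_def by simp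
  define P where "P = (\<lambda>t. \<exists>rho\<in>simplices K p. sigma \<subseteq> rho \<and> t \<subseteq> rho)"
  have inner: "min 1 (\<Sum>i\<in>simplices K p.
               \<bar>bcoef K ori (q + (p - q)) (p - q) sigma i\<bar> * \<bar>bcoef K ori (q' + (p - q')) (p - q') k i\<bar>)
        = (of_bool (P k) :: int)" if q': "q' \<in> {0..p}" and k: "k \<in> simplices K q'" for q' k
  proof -
    have qq: "q + (p - q) = p" "q' + (p - q') = p" "p - (p - q) = q" "p - (p - q') = q'"
      using q' assms(3) by auto
    have "(\<Sum>i\<in>simplices K p.
               \<bar>bcoef K ori (q + (p - q)) (p - q) sigma i\<bar> * \<bar>bcoef K ori (q' + (p - q')) (p - q') k i\<bar>)
          = (\<Sum>i\<in>simplices K p. of_bool (sigma \<subseteq> i \<and> k \<subseteq> i))"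
      by (rule sum.cong) (use qq assms(4) k in \<open>auto simp: abs_bcoef\<close>)
    also have "\<dots> = int (card (simplices K p \<inter> {i. sigma \<subseteq> i \<and> k \<subseteq> i}))"
      using fins by simp
    finally have eq: "(\<Sum>i\<in>simplices K p.
               \<bar>bcoef K ori (q + (p - q)) (p - q) sigma i\<bar> * \<bar>bcoef K ori (q' + (p - q')) (p - q') k i\<bar>)
        = int (card (simplices K p \<inter> {i. sigma \<subseteq> i \<and> k \<subseteq> i}))" .
    have fA: "finite (simplices K p \<inter> {i. sigma \<subseteq> i \<and> k \<subseteq> i})" using fins[of p] by simp
    show ?thesis
    proof (cases "P k")
      case True
      then have "simplices K p \<inter> {i. sigma \<subseteq> i \<and> k \<subseteq> i} \<noteq> {}" unfolding P_def by blast
      then have "card (simplices K p \<inter> {i. sigma \<subseteq> i \<and> k \<subseteq> i}) > 0" using fA card_gt_0_iff by blast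
      then show ?thesis using True eq by simp
    next
      case False
      then have "simplices K p \<inter> {i. sigma \<subseteq> i \<and> k \<subseteq> i} = {}" unfolding P_def by blast
      then show ?thesis using False eq by simp
    qed
  qed
  have "(\<Sum>q'=0..p. \<Sum>k\<in>simplices K q'.
            min 1 (\<Sum>i\<in>simplices K p.
               \<bar>bcoef K ori (q + (p - q)) (p - q) sigma i\<bar> * \<bar>bcoef K ori (q' + (p - q')) (p - q') k i\<bar>))
      = (\<Sum>q'=0..p. \<Sum>k\<in>simplices K q'. (of_bool (P k) :: int))"
    using inner by (intro sum.cong refl) auto
  also have "\<dots> = (\<Sum>k\<in>(\<Union>q'\<in>{0..p}. simplices K q'). (of_bool (P k) :: int))"
    by (rule sum.UNION_disjoint[symmetric]) (use fins in \<open>auto simp: simplices_def\<close>)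
  also have "\<dots> = int (card ((\<Union>q'\<in>{0..p}. simplices K q') \<inter> {x. P x}))"
    using fins by simp
  also have "(\<Union>q'\<in>{0..p}. simplices K q') \<inter> {x. P x} = insert sigma {tau\<in>K. tau \<noteq> sigma \<and> P tau}"
  proof (intro equalityI subsetI)
    fix x assume "x \<in> (\<Union>q'\<in>{0..p}. simplices K q') \<inter> {x. P x}"
    then show "x \<in> insert sigma {tau\<in>K. tau \<noteq> sigma \<and> P tau}"
      by (auto simp: simplices_def)
  next
    fix x assume x: "x \<in> insert sigma {tau\<in>K. tau \<noteq> sigma \<and> P tau}"
    have xK: "x \<in> K" and Px: "P x"
      using x assms(4,5) unfolding P_def simplices_def by auto
    then obtain rho where rho: "rho \<in> simplices K p" "x \<subseteq> rho" unfolding P_def by blast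
    have "finite rho" "card rho = Suc p" using rho(1) assms(1) unfolding simplices_def simplicial_complex_def by auto
    hence "card x \<le> Suc p" using rho(2) card_mono by metis
    moreover have "x \<noteq> {}" "finite x" using xK assms(1) unfolding simplicial_complex_def by auto
    ultimately have "card x - 1 \<in> {0..p}" "card x = Suc (card x - 1)"
      by (auto simp: card_gt_0_iff)
    then show "x \<in> (\<Union>q'\<in>{0..p}. simplices K q') \<inter> {x. P x}"
      using xK Px unfolding simplices_def by blast
  qed
  also have "card (insert sigma {tau\<in>K. tau \<noteq> sigma \<and> P tau}) = Suc (upper_degree K p sigma)"
    using finK unfolding upper_degree_def P_def by simp
  finally show ?thesis by simp
qed

end
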